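(* Let $\mu$ be an atomic probability measure on $\mathbb{R}$ consisting of exactly $m$ distinct atoms and let $\nu$ be an atomic probability measure consisting of exactly $n$ distinct atoms. Then $\mu\rhd\nu$ is an atomic probability measure consisting of exactly $mn$ distinct atoms.
   Context: For a probability measure $\mu$ on $\mathbb{R}$, $G_\mu(z)=\int\frac{1}{z-x}d\mu(x)$ on $\mathbb{C}^+$ and $H_\mu=1/G_\mu$. The monotone convolution $\mu\rhd\nu$ is the unique probability measure with $H_{\mu\rhd\nu}=H_\mu\circ H_\nu$ on $\mathbb{C}^+$. An atomic probability measure with $m$ distinct atoms is of the form $\sum_{k=1}^m\lambda_k\delta_{a_k}$ with $\lambda_k>0$ and distinct $a_k$. *)

theory Defs
  imports "HOL-Probability.Probability"
begin

definition real_prob_measure :: "real measure \<Rightarrow> bool" where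
  "real_prob_measure \<mu> \<longleftrightarrow> prob_space \<mu> \<and> sets \<mu> = sets borel"

definition cauchy_G :: "real measure \<Rightarrow> complex \<Rightarrow> complex" where
  "cauchy_G \<mu> z = integral\<^sup>L \<mu> (\<lambda>x. 1 / (z - complex_of_real x))"

definition cauchy_H :: "real measure \<Rightarrow> complex \<Rightarrow> complex" where
  "cauchy_H \<mu> z = 1 / cauchy_G \<mu> z"

definition monotone_conv :: "real measure \<Rightarrow> real measure \<Rightarrow> real measure" where
  "monotone_conv \<mu> \<nu> = (THE \<rho>. real_prob_measure \<rho> \<and>
     (\<forall>z. Im z > 0 \<longrightarrow> cauchy_H \<rho> z = cauchy_H \<mu> (cauchy_H \<nu> z)))"

definition atomic_prob :: "real measure \<Rightarrow> nat \<Rightarrow> bool" where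
  "atomic_prob \<mu> m \<longleftrightarrow> real_prob_measure \<mu> \<and>
     (\<exists>a w. inj_on a {..<m} \<and> (\<forall>k<m. w k > (0::real)) \<and>
        (\<forall>A\<in>sets borel. emeasure \<mu> A = (\<Sum>k<m. ennreal (w k) * indicator A (a k))))"

end

theory Submission
  imports Defs "HOL-Computational_Algebra.Polynomial"
begin


definition atoms_rep :: "real measure \<Rightarrow> real set \<Rightarrow> (real \<Rightarrow> real) \<Rightarrow> bool" where
 "atoms_rep M F q \<longleftrightarrow> real_prob_measure M \<and> finite F \<and> (\<forall>s\<in>F. q s > 0) \<and>
    (\<forall>A\<in>sets borel. emeasure M A = (\<Sum>s\<in>F. ennreal (q s) * indicator A s))"

lemma atomic_prob_iff: "atomic_prob M m \<longleftrightarrow> (\<exists>F q. atoms_rep M F q \<and> card F = m)"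
proof
  assume "atomic_prob M m"
  then obtain a w where M: "real_prob_measure M" and inj: "inj_on a {..<m}" and w: "\<forall>k<m. w k > (0::real)"
    and e: "\<forall>A\<in>sets borel. emeasure M A = (\<Sum>k<m. ennreal (w k) * indicator A (a k))"
    unfolding atomic_prob_def by blast
  define q where "q = w \<circ> the_inv_into {..<m} a"
  have "atoms_rep M (a ` {..<m}) q"
    unfolding atoms_rep_def
  proof (intro conjI ballI)
    show "q s > 0" if "s \<in> a ` {..<m}" for s
      using that w inj by (auto simp: q_def the_inv_into_f_f)
    fix A :: "real set" assume "A \<in> sets borel"
    have "(\<Sum>s\<in>a ` {..<m}. ennreal (q s) * indicator A s) = (\<Sum>k<m. ennreal (q (a k)) * indicator A (a k))"
      by (rule sum.reindex[OF inj, unfolded comp_def])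
    also have "\<dots> = (\<Sum>k<m. ennreal (w k) * indicator A (a k))"
      by (rule sum.cong) (auto simp: q_def the_inv_into_f_f[OF inj])
    finally show "emeasure M A = (\<Sum>s\<in>a ` {..<m}. ennreal (q s) * indicator A s)"
      using e \<open>A \<in> sets borel\<close> by simp
  qed (use M in auto)
  moreover have "card (a ` {..<m}) = m" using card_image[OF inj] by simp
  ultimately show "\<exists>F q. atoms_rep M F q \<and> card F = m" by blast
next
  assume "\<exists>F q. atoms_rep M F q \<and> card F = m"
  then obtain F q where r: "atoms_rep M F q" and c: "card F = m" by blast
  have fin: "finite F" using r by (simp add: atoms_rep_def)
  obtain h where h: "bij_betw h {0..<card F} F" using ex_bij_betw_nat_finite[OF fin] by blast
  have inj: "inj_on h {..<m}" using h c by (simp add: bij_betw_def lessThan_atLeast0)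
  have im: "h ` {..<m} = F" using h c by (simp add: bij_betw_def lessThan_atLeast0)
  have pos: "\<forall>k<m. 0 < q (h k)" using r im by (auto simp: atoms_rep_def)
  have e: "\<forall>A\<in>sets borel. emeasure M A = (\<Sum>k<m. ennreal (q (h k)) * indicator A (h k))"
  proof
    fix A :: "real set" assume A: "A \<in> sets borel"
    have "(\<Sum>s\<in>F. ennreal (q s) * indicator A s) = (\<Sum>k<m. ennreal (q (h k)) * indicator A (h k))"
      using sum.reindex[OF inj, of "\<lambda>s. ennreal (q s) * indicator A s"] im by simp
    then show "emeasure M A = (\<Sum>k<m. ennreal (q (h k)) * indicator A (h k))"
      using r A by (simp add: atoms_rep_def)
  qed
  have "real_prob_measure M" using r by (simp add: atoms_rep_def)
  then show "atomic_prob M m" unfolding atomic_prob_def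
    by (intro conjI exI[of _ h] exI[of _ "\<lambda>k. q (h k)"]) (use inj pos e in auto)
qed

lemma rp_space: "real_prob_measure M \<Longrightarrow> space M = UNIV"
  unfolding real_prob_measure_def using sets_eq_imp_space_eq by fastforce

lemma rep_sum: assumes "atoms_rep M F q" shows "sum q F = 1"
proof -
  have rp: "real_prob_measure M" and fin: "finite F" and pos: "\<forall>s\<in>F. q s > 0"
    and e: "\<forall>A\<in>sets borel. emeasure M A = (\<Sum>s\<in>F. ennreal (q s) * indicator A s)"
    using assms by (auto simp: atoms_rep_def)
  interpret prob_space M using rp by (simp add: real_prob_measure_def)
  have "emeasure M UNIV = 1" using emeasure_space_1 rp_space[OF rp] by simp
  then have "(\<Sum>s\<in>F. ennreal (q s)) = 1" using e by simp
  then have "ennreal (sum q F) = 1" using pos by (subst sum_ennreal[symmetric]) auto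
  then show ?thesis using pos by (simp add: ennreal_eq_1 sum_nonneg less_imp_le)
qed

definition pmeas :: "real set \<Rightarrow> (real \<Rightarrow> real) \<Rightarrow> real measure" where
  "pmeas F q = distr (measure_pmf (embed_pmf (\<lambda>x. if x \<in> F then q x else 0))) borel id"

lemma pmeas:
  assumes fin: "finite F" and pos: "\<forall>s\<in>F. q s > 0" and one: "sum q F = 1"
  shows "atoms_rep (pmeas F q) F q"
    and "\<And>f :: real \<Rightarrow> complex. f \<in> borel_measurable borel \<Longrightarrow>
          integral\<^sup>L (pmeas F q) f = (\<Sum>s\<in>F. of_real (q s) * f s)"
proof -
  define g where "g = (\<lambda>x. if x \<in> F then q x else 0)"
  have nn: "\<And>x. 0 \<le> g x" using pos by (auto simp: g_def less_imp_le)
  have pr: "(\<integral>\<^sup>+x. ennreal (g x) \<partial>count_space UNIV) = 1"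
    using fin one pos by (subst nn_integral_count_space'[of F]) (auto simp: g_def sum_ennreal less_imp_le)
  define P where "P = embed_pmf g"
  have pmfP: "pmf P x = g x" for x unfolding P_def by (rule pmf_embed_pmf[OF nn pr])
  have setP: "set_pmf P = F" unfolding P_def set_embed_pmf[OF nn pr] using pos by (auto simp: g_def)
  have pm: "pmeas F q = distr (measure_pmf P) borel id" by (simp add: pmeas_def P_def g_def)
  show "atoms_rep (pmeas F q) F q"
    unfolding atoms_rep_def
  proof (intro conjI ballI)
    show "real_prob_measure (pmeas F q)"
      unfolding real_prob_measure_def pm
      by (auto intro!: prob_space.prob_space_distr prob_space_measure_pmf)
    fix A :: "real set" assume A: "A \<in> sets borel"
    have "emeasure (pmeas F q) A = emeasure (measure_pmf P) A"
      using A by (simp add: pm emeasure_distr)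
    also have "\<dots> = emeasure (measure_pmf P) (A \<inter> F)"
      using emeasure_Int_set_pmf[of P A] setP by simp
    also have "\<dots> = (\<Sum>s\<in>A \<inter> F. ennreal (pmf P s))"
      using fin by (simp add: emeasure_measure_pmf_finite)
    also have "\<dots> = (\<Sum>s\<in>F. ennreal (q s) * indicator A s)"
      using fin by (auto simp: pmfP g_def indicator_def intro!: sum.mono_neutral_cong_left)
    finally show "emeasure (pmeas F q) A = (\<Sum>s\<in>F. ennreal (q s) * indicator A s)" .
  qed (use fin pos in auto)
  fix f :: "real \<Rightarrow> complex" assume f: "f \<in> borel_measurable borel"
  have "integral\<^sup>L (pmeas F q) f = integral\<^sup>L (measure_pmf P) f"
    unfolding pm by (subst integral_distr) (use f in auto)
  also have "\<dots> = (\<Sum>s\<in>F. pmf P s *\<^sub>R f s)"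
    by (rule integral_measure_pmf[OF fin]) (use setP in auto)
  also have "\<dots> = (\<Sum>s\<in>F. of_real (q s) * f s)"
    by (rule sum.cong) (auto simp: pmfP g_def scaleR_conv_of_real)
  finally show "integral\<^sup>L (pmeas F q) f = (\<Sum>s\<in>F. of_real (q s) * f s)" .
qed

lemma rep_eq_pmeas: assumes r: "atoms_rep M F q" shows "M = pmeas F q"
proof -
  have fin: "finite F" and pos: "\<forall>s\<in>F. q s > 0" using r by (auto simp: atoms_rep_def)
  have r2: "atoms_rep (pmeas F q) F q" using pmeas(1)[OF fin pos rep_sum[OF r]] .
  show ?thesis
  proof (rule measure_eqI)
    show "sets M = sets (pmeas F q)" using r r2 by (simp add: atoms_rep_def real_prob_measure_def)
    fix A assume "A \<in> sets M"
    then have "A \<in> sets borel" using r by (simp add: atoms_rep_def real_prob_measure_def)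
    then show "emeasure M A = emeasure (pmeas F q) A" using r r2 by (simp add: atoms_rep_def)
  qed
qed

lemma rep_integral:
  fixes f :: "real \<Rightarrow> complex"
  assumes r: "atoms_rep M F q" and f: "f \<in> borel_measurable borel"
  shows "integral\<^sup>L M f = (\<Sum>s\<in>F. of_real (q s) * f s)"
proof -
  have fin: "finite F" and pos: "\<forall>s\<in>F. q s > 0" using r by (auto simp: atoms_rep_def)
  show ?thesis using pmeas(2)[OF fin pos rep_sum[OF r] f] rep_eq_pmeas[OF r] by simp
qed

lemma meas_G: "(\<lambda>t::real. 1 / (z - complex_of_real t)) \<in> borel_measurable borel"
  by measurable

lemma rep_G: "atoms_rep M F q \<Longrightarrow> cauchy_G M z = (\<Sum>s\<in>F. of_real (q s) / (z - of_real s))"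
  unfolding cauchy_G_def by (subst rep_integral[OF _ meas_G]) auto



lemma G_point:
  assumes rp: "real_prob_measure M"
  shows "(\<lambda>n. - (1 / real (Suc n)) * Im (cauchy_G M (complex_of_real x + \<i> * of_real (1 / real (Suc n)))))
           \<longlonglongrightarrow> measure M {x}"
proof -
  interpret prob_space M using rp by (simp add: real_prob_measure_def)
  have sets: "sets M = sets borel" using rp by (simp add: real_prob_measure_def)
  have sp: "space M = UNIV" using rp_space[OF rp] .
  have mG: "(\<lambda>t. 1 / (z - complex_of_real t)) \<in> borel_measurable M" for z
    unfolding measurable_cong_sets[OF sets refl] by (rule meas_G)
  have intG: "integrable M (\<lambda>t. 1 / (z - complex_of_real t))" if z: "Im z > 0" for z
  proof (rule integrable_const_bound[where B="1 / Im z"])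
    show "AE t in M. norm (1 / (z - complex_of_real t)) \<le> 1 / Im z"
    proof (intro AE_I2)
      fix t
      have "Im z \<le> norm (z - complex_of_real t)"
        using abs_Im_le_cmod[of "z - complex_of_real t"] by simp
      then show "norm (1 / (z - complex_of_real t)) \<le> 1 / Im z"
        using z by (simp add: norm_divide frac_le)
    qed
  qed (rule mG)
  define y where "y n = 1 / real (Suc n)" for n
  have ypos: "y n > 0" for n by (simp add: y_def)
  define s where "s n t = (y n)\<^sup>2 / ((x - t)\<^sup>2 + (y n)\<^sup>2)" for n t
  have key: "- y n * Im (cauchy_G M (complex_of_real x + \<i> * of_real (y n))) = integral\<^sup>L M (s n)" for n
  proof -
    let ?z = "complex_of_real x + \<i> * of_real (y n)"
    have "Im (cauchy_G M ?z) = integral\<^sup>L M (\<lambda>t. Im (1 / (?z - complex_of_real t)))"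
      unfolding cauchy_G_def by (rule integral_Im[symmetric]) (rule intG, simp add: ypos)
    also have "\<dots> = integral\<^sup>L M (\<lambda>t. - y n / ((x - t)\<^sup>2 + (y n)\<^sup>2))"
      by (rule Bochner_Integration.integral_cong[OF refl]) (simp add: Im_divide power2_eq_square)
    finally have "- y n * Im (cauchy_G M ?z) = - y n * integral\<^sup>L M (\<lambda>t. - y n / ((x - t)\<^sup>2 + (y n)\<^sup>2))"
      by simp
    also have "\<dots> = integral\<^sup>L M (\<lambda>t. - y n * (- y n / ((x - t)\<^sup>2 + (y n)\<^sup>2)))"
      by (rule integral_mult_right_zero[symmetric])
    also have "\<dots> = integral\<^sup>L M (s n)"
      by (rule Bochner_Integration.integral_cong[OF refl]) (simp add: s_def power2_eq_square)
    finally show ?thesis .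
  qed
  have conv: "(\<lambda>n. integral\<^sup>L M (s n)) \<longlonglongrightarrow> integral\<^sup>L M (indicator {x} :: real \<Rightarrow> real)"
  proof (rule integral_dominated_convergence[where w="\<lambda>_. 1"])
    show "indicator {x} \<in> borel_measurable M" unfolding measurable_cong_sets[OF sets refl] by measurable
    show "s n \<in> borel_measurable M" for n
      unfolding measurable_cong_sets[OF sets refl] s_def by measurable
    show "integrable M (\<lambda>_. 1::real)" by simp
    have y0: "y \<longlonglongrightarrow> 0" unfolding y_def using LIMSEQ_Suc[OF lim_const_over_n[of 1]] by simp
    show "AE t in M. (\<lambda>n. s n t) \<longlonglongrightarrow> indicator {x} t"
    proof (intro AE_I2)
      fix t
      show "(\<lambda>n. s n t) \<longlonglongrightarrow> indicator {x} t"
      proof (cases "t = x")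
        case True
        have "(\<lambda>n. s n t) = (\<lambda>n. 1)" using True ypos[THEN less_imp_neq] by (auto simp: s_def intro!: ext)
        then show ?thesis using True by simp
      next
        case False
        then have d: "(x - t)\<^sup>2 > 0" by simp
        have "(\<lambda>n. (y n)\<^sup>2 / ((x - t)\<^sup>2 + (y n)\<^sup>2)) \<longlonglongrightarrow> 0\<^sup>2 / ((x - t)\<^sup>2 + 0\<^sup>2)"
          by (intro tendsto_intros y0) (use d in simp)
        then show ?thesis using False by (simp add: s_def)
      qed
    qed
    show "AE t in M. norm (s n t) \<le> 1" for n
    proof (intro AE_I2)
      fix t
      have d: "0 < (x - t)\<^sup>2 + (y n)\<^sup>2" using ypos[of n] by (simp add: add_nonneg_pos)
      have "(y n)\<^sup>2 / ((x - t)\<^sup>2 + (y n)\<^sup>2) \<le> 1" using d by (simp add: divide_le_eq_1_pos)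
      then show "norm (s n t) \<le> 1" by (simp add: s_def)
    qed
  qed
  have "integral\<^sup>L M (indicator {x} :: real \<Rightarrow> real) = measure M {x}" using sp by simp
  then show ?thesis using conv key by (simp add: y_def)
qed

lemma uniq_rep:
  assumes rp: "real_prob_measure M" and r: "atoms_rep N F q"
    and eq: "\<forall>z. Im z > 0 \<longrightarrow> cauchy_G M z = cauchy_G N z"
  shows "atoms_rep M F q"
proof -
  have rN: "real_prob_measure N" and fin: "finite F" and pos: "\<forall>s\<in>F. q s > 0"
    and e: "\<forall>A\<in>sets borel. emeasure N A = (\<Sum>s\<in>F. ennreal (q s) * indicator A s)"
    using r by (auto simp: atoms_rep_def)
  interpret M: prob_space M using rp by (simp add: real_prob_measure_def)
  have sets: "sets M = sets borel" using rp by (simp add: real_prob_measure_def)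
  have sp: "space M = UNIV" using rp_space[OF rp] .
  have same: "measure M {x} = measure N {x}" for x
  proof -
    have "(\<lambda>n. - (1 / real (Suc n)) * Im (cauchy_G M (complex_of_real x + \<i> * of_real (1 / real (Suc n)))))
        = (\<lambda>n. - (1 / real (Suc n)) * Im (cauchy_G N (complex_of_real x + \<i> * of_real (1 / real (Suc n)))))"
      using eq by auto
    then show ?thesis using G_point[OF rp, of x] G_point[OF rN, of x] by (auto intro: LIMSEQ_unique)
  qed
  have eN: "emeasure N {x} = (if x \<in> F then ennreal (q x) else 0)" for x
  proof -
    have "emeasure N {x} = (\<Sum>s\<in>F. ennreal (q s) * indicator {x} s)" using e by simp
    also have "\<dots> = (\<Sum>s\<in>F. if s = x then ennreal (q x) else 0)"
      by (rule sum.cong) (auto simp: indicator_def)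
    also have "\<dots> = (if x \<in> F then ennreal (q x) else 0)" using fin by (simp add: sum.delta')
    finally show ?thesis .
  qed
  have mN: "measure N {x} = (if x \<in> F then q x else 0)" for x
    using eN[of x] pos by (auto simp: measure_def less_imp_le)
  have eM: "emeasure M {x} = (if x \<in> F then ennreal (q x) else 0)" for x
    using same[of x] mN[of x] M.emeasure_eq_measure[of "{x}"] by auto
  have sum1: "sum q F = 1" using rep_sum[OF r] .
  have Fb: "F \<in> sets borel" using fin by (simp add: finite_imp_closed borel_closed)
  have "emeasure M F = (\<Sum>s\<in>F. emeasure M {s})"
    by (rule emeasure_eq_sum_singleton[OF fin]) (simp add: sets)
  also have "\<dots> = (\<Sum>s\<in>F. ennreal (q s))" by (rule sum.cong[OF refl]) (simp add: eM)
  also have "\<dots> = ennreal (sum q F)" using pos by (intro sum_ennreal) (auto simp: less_imp_le)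
  also have "\<dots> = 1" using sum1 by simp
  finally have eF: "emeasure M F = 1" .
  have null: "emeasure M (UNIV - F) = 0"
  proof -
    have Fs: "F \<in> sets M" using Fb sets by simp
    have "emeasure M (UNIV - F) = emeasure M (space M) - emeasure M F"
      using emeasure_compl[OF Fs] sp eF by simp
    then show ?thesis using eF M.emeasure_space_1 by simp
  qed
  show ?thesis
    unfolding atoms_rep_def
  proof (intro conjI ballI)
    fix A :: "real set" assume A: "A \<in> sets borel"
    have FA: "A \<inter> F \<in> sets M" "A - F \<in> sets M" unfolding sets using A Fb by auto
    have "emeasure M (A - F) \<le> emeasure M (UNIV - F)"
      by (rule emeasure_mono) (use Fb sets in auto)
    then have AF0: "emeasure M (A - F) = 0" using null by simp
    have dj: "A \<inter> F \<inter> (A - F) = {}" by blast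
    have "emeasure M (A \<inter> F) + emeasure M (A - F) = emeasure M (A \<inter> F \<union> (A - F))"
      by (rule plus_emeasure[OF FA dj])
    then have "emeasure M A = emeasure M (A \<inter> F)" using AF0 by (simp add: Int_Diff_Un)
    also have "\<dots> = (\<Sum>s\<in>A \<inter> F. emeasure M {s})"
      by (rule emeasure_eq_sum_singleton) (use fin sets in auto)
    also have "\<dots> = (\<Sum>s\<in>F \<inter> A. ennreal (q s))"
      by (subst Int_commute, rule sum.cong[OF refl]) (simp add: eM)
    also have "\<dots> = (\<Sum>s\<in>F. if s \<in> A then ennreal (q s) else 0)"
      by (rule sum.inter_restrict[OF fin])
    also have "\<dots> = (\<Sum>s\<in>F. ennreal (q s) * indicator A s)"
      by (rule sum.cong[OF refl]) (simp add: indicator_def)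
    finally show "emeasure M A = (\<Sum>s\<in>F. ennreal (q s) * indicator A s)" .
  qed (use rp fin pos in auto)
qed



definition lin :: "real \<Rightarrow> complex poly" where "lin t = [:- complex_of_real t, 1:]"

lemma poly_lin[simp]: "poly (lin t) z = z - complex_of_real t"
  by (simp add: lin_def)

lemma lin_nz[simp]: "lin t \<noteq> 0" by (simp add: lin_def)

lemma prodlin:
  assumes "finite T"
  shows "degree (\<Prod>t\<in>T. lin t) = card T" "coeff (\<Prod>t\<in>T. lin t) (card T) = 1"
proof -
  have d: "degree (\<Prod>t\<in>T. lin t) = card T"
    by (subst degree_prod_eq_sum_degree) (auto simp: lin_def)
  show "degree (\<Prod>t\<in>T. lin t) = card T" by (rule d)
  have "lead_coeff (\<Prod>t\<in>T. lin t) = 1" by (simp add: lead_coeff_prod lin_def)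
  then show "coeff (\<Prod>t\<in>T. lin t) (card T) = 1" using d by simp
qed

lemma deg_lt:
  fixes q :: "complex poly"
  assumes "degree q \<le> n" "coeff q n = 0" "n > 0"
  shows "degree q < n"
proof (cases "q = 0")
  case True then show ?thesis using assms by simp
next
  case False
  then have "coeff q (degree q) \<noteq> 0" by simp
  then show ?thesis using assms by (cases "degree q = n") auto
qed

lemma vanish:
  fixes q :: "complex poly"
  assumes fin: "finite B" and deg: "degree q < card B" and z: "\<forall>b\<in>B. poly q b = 0"
  shows "q = 0"
proof (rule ccontr)
  assume nz: "q \<noteq> 0"
  have "card B \<le> card {x. poly q x = 0}"
    using z by (intro card_mono poly_roots_finite[OF nz]) auto
  also have "\<dots> \<le> degree q" by (rule card_poly_roots_bound[OF nz])
  finally show False using deg by simp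
qed

lemma IVT_strict:
  fixes f :: "real \<Rightarrow> real"
  assumes c: "continuous_on {l..u} f" and lu: "l < u" and s: "f l * f u < 0"
  shows "\<exists>x. l < x \<and> x < u \<and> f x = 0"
proof -
  have "f l \<noteq> 0" "f u \<noteq> 0" using s by auto
  have "\<exists>x. l \<le> x \<and> x \<le> u \<and> f x = 0"
  proof (cases "f l < 0")
    case True
    then have "f u > 0" using s by (simp add: mult_less_0_iff)
    then show ?thesis using IVT'[of f l 0 u] True lu c by auto
  next
    case False
    then have "f l > 0" "f u < 0" using s by (auto simp: mult_less_0_iff)
    then show ?thesis using IVT2'[of f u 0 l] lu c by auto
  qed
  then show ?thesis using \<open>f l \<noteq> 0\<close> \<open>f u \<noteq> 0\<close> by (metis order_le_less)
qed

lemma Im_inv: "Im (1 / w) = - Im w / ((Re w)\<^sup>2 + (Im w)\<^sup>2)"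
  by (simp add: Im_divide power2_eq_square)

lemma Im_inv_neg: "Im w > 0 \<Longrightarrow> Im (1 / w) < 0"
  unfolding Im_inv by (intro divide_neg_pos) (auto simp: add_nonneg_pos)

lemma Im_inv_pos: "Im w < 0 \<Longrightarrow> Im (1 / w) > 0"
  unfolding Im_inv by (intro divide_pos_pos) (auto simp: add_nonneg_pos)

locale nud =
  fixes S :: "real set" and p :: "real \<Rightarrow> real"
  assumes finS: "finite S" and neS: "S \<noteq> {}" and ppos: "\<forall>s\<in>S. p s > 0" and psum: "sum p S = 1"
begin

definition Qr :: "real \<Rightarrow> real" where "Qr x = (\<Prod>t\<in>S. x - t)"
definition Rr :: "real \<Rightarrow> real" where "Rr x = (\<Sum>s\<in>S. p s * (\<Prod>t\<in>S-{s}. x - t))"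
definition Gr :: "real \<Rightarrow> real" where "Gr x = (\<Sum>s\<in>S. p s / (x - s))"
definition Pr :: "real \<Rightarrow> real \<Rightarrow> real" where "Pr a x = Qr x - a * Rr x"
definition Gc :: "complex \<Rightarrow> complex" where "Gc z = (\<Sum>s\<in>S. complex_of_real (p s) / (z - complex_of_real s))"

definition Qp :: "complex poly" where "Qp = (\<Prod>t\<in>S. lin t)"
definition Rp :: "complex poly" where "Rp = (\<Sum>s\<in>S. smult (complex_of_real (p s)) (\<Prod>t\<in>S-{s}. lin t))"
definition Pp :: "real \<Rightarrow> complex poly" where "Pp a = Qp - smult (complex_of_real a) Rp"

lemma poly_Qp: "poly Qp z = (\<Prod>t\<in>S. z - complex_of_real t)"
  by (simp add: Qp_def poly_prod)
lemma poly_Rp: "poly Rp z = (\<Sum>s\<in>S. complex_of_real (p s) * (\<Prod>t\<in>S-{s}. z - complex_of_real t))"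
  by (simp add: Rp_def poly_sum poly_prod)
lemma poly_Pp_real: "poly (Pp a) (complex_of_real x) = complex_of_real (Pr a x)"
  by (simp add: Pp_def Pr_def poly_Qp poly_Rp Qr_def Rr_def)
lemma poly_Rp_real: "poly Rp (complex_of_real x) = complex_of_real (Rr x)"
  by (simp add: poly_Rp Rr_def)

lemma n_pos: "card S > 0" using finS neS by (simp add: card_gt_0_iff)

lemma deg_Qp: "degree Qp = card S" "coeff Qp (card S) = 1"
  using prodlin[OF finS] by (simp_all add: Qp_def)

lemma deg_Rp: "degree Rp \<le> card S - 1" "coeff Rp (card S - 1) = 1"
proof -
  have cs: "card (S - {s}) = card S - 1" if "s \<in> S" for s using that finS by simp
  show "degree Rp \<le> card S - 1"
    unfolding Rp_def
  proof (intro degree_sum_le finS)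
    fix s assume "s \<in> S"
    then show "degree (smult (complex_of_real (p s)) (\<Prod>t\<in>S-{s}. lin t)) \<le> card S - 1"
      using prodlin(1)[of "S - {s}"] finS cs by (simp add: degree_smult_le order_trans[OF degree_smult_le])
  qed
  have "coeff Rp (card S - 1) = (\<Sum>s\<in>S. complex_of_real (p s) * coeff (\<Prod>t\<in>S-{s}. lin t) (card S - 1))"
    by (simp add: Rp_def coeff_sum)
  also have "\<dots> = (\<Sum>s\<in>S. complex_of_real (p s))"
  proof (rule sum.cong[OF refl])
    fix s assume s: "s \<in> S"
    have "coeff (\<Prod>t\<in>S-{s}. lin t) (card S - 1) = 1"
      using prodlin(2)[of "S - {s}"] finS cs[OF s] by simp
    then show "complex_of_real (p s) * coeff (\<Prod>t\<in>S-{s}. lin t) (card S - 1) = complex_of_real (p s)" by simp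
  qed
  also have "\<dots> = 1" using psum by (simp flip: of_real_sum)
  finally show "coeff Rp (card S - 1) = 1" .
qed

lemma coeff_Rp_n: "coeff Rp (card S) = 0"
  using deg_Rp(1) n_pos by (intro coeff_eq_0) simp

lemma deg_Pp: "degree (Pp a) \<le> card S" "coeff (Pp a) (card S) = 1"
proof -
  show "degree (Pp a) \<le> card S"
    unfolding Pp_def using deg_Qp deg_Rp(1)
    by (intro degree_diff_le) (auto intro: order_trans[OF degree_smult_le])
  show "coeff (Pp a) (card S) = 1" by (simp add: Pp_def deg_Qp coeff_Rp_n)
qed

lemma Pr_atom: "s \<in> S \<Longrightarrow> Pr a s = - a * p s * (\<Prod>t\<in>S-{s}. s - t)"
proof -
  assume s: "s \<in> S"
  have "Qr s = 0" unfolding Qr_def using s finS by (auto intro: prod_zero)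
  moreover have "Rr s = p s * (\<Prod>t\<in>S-{s}. s - t)"
  proof -
    have "Rr s = p s * (\<Prod>t\<in>S-{s}. s - t) + (\<Sum>s'\<in>S-{s}. p s' * (\<Prod>t\<in>S-{s'}. s - t))"
      unfolding Rr_def using s finS by (simp add: sum.remove)
    moreover have "(\<Sum>s'\<in>S-{s}. p s' * (\<Prod>t\<in>S-{s'}. s - t)) = 0"
      using s finS by (intro sum.neutral) (auto intro: prod_zero)
    ultimately show ?thesis by simp
  qed
  ultimately show ?thesis by (simp add: Pr_def)
qed

lemma Rr_off: "x \<notin> S \<Longrightarrow> Rr x = Qr x * Gr x"
proof -
  assume x: "x \<notin> S"
  have "Qr x * (p s / (x - s)) = p s * (\<Prod>t\<in>S-{s}. x - t)" if s: "s \<in> S" for s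
  proof -
    have "Qr x = (x - s) * (\<Prod>t\<in>S-{s}. x - t)" unfolding Qr_def using s finS by (simp add: prod.remove)
    moreover have "x - s \<noteq> 0" using x s by auto
    ultimately show ?thesis by simp
  qed
  then show ?thesis unfolding Rr_def Gr_def by (simp add: sum_distrib_left)
qed

lemma Pr_off: "x \<notin> S \<Longrightarrow> Pr a x = Qr x * (1 - a * Gr x)"
  using Rr_off by (simp add: Pr_def algebra_simps)

lemma Pr_cont: "continuous_on A (Pr a)"
  unfolding Pr_def Qr_def Rr_def by (intro continuous_intros)

lemma root_R: assumes "Pr a b = 0" shows "Rr b \<noteq> 0"
proof
  assume R: "Rr b = 0"
  then have "Qr b = 0" using assms by (simp add: Pr_def)
  then have b: "b \<in> S" unfolding Qr_def using finS by auto
  have "Pr 1 b = - p b * (\<Prod>t\<in>S-{b}. b - t)" using Pr_atom[OF b, of 1] by simp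
  moreover have "Pr 1 b = 0" using R \<open>Qr b = 0\<close> by (simp add: Pr_def)
  moreover have "(\<Prod>t\<in>S-{b}. b - t) \<noteq> 0" using finS by auto
  ultimately show False using ppos b by auto
qed

end



context nud
begin

lemma Pr_zero_atom: "s \<in> S \<Longrightarrow> Pr 0 s = 0"
  using Pr_atom[of s 0] by simp

lemma prod_pos_gt:
  fixes f :: "real \<Rightarrow> real"
  shows "(\<And>t. t \<in> T \<Longrightarrow> f t > 0) \<Longrightarrow> (\<Prod>t\<in>T. f t) > 0"
  by (rule prod_pos) auto

lemma ring6: "(- a * b * (c * X)) * (- a * d * (e * Y)) = (a*a*b*d*(X*Y)) * (c*e)" for a b c d e X Y :: real
  by (simp add: algebra_simps)
lemma ring7: "((c * Y) * W) * (- a * b * X) = (- a * b * W * (X * Y)) * c" for a b c W X Y :: real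
  by (simp add: algebra_simps)

lemma roots_exist: "\<exists>B. finite B \<and> card B = card S \<and> (\<forall>b\<in>B. Pr a b = 0)"
proof (cases "a = 0")
  case True
  then show ?thesis using finS Pr_zero_atom by blast
next
  case anz: False
  define M where "M = Max S"
  define nxt where "nxt s = Min {t\<in>S. s < t}" for s
  have MS: "M \<in> S" using finS neS by (simp add: M_def)
  have leM: "t \<in> S \<Longrightarrow> t \<le> M" for t using finS by (simp add: M_def)
  have nxt: "nxt s \<in> S \<and> s < nxt s \<and> (\<forall>t\<in>S. t \<le> s \<or> nxt s \<le> t)" if s: "s \<in> S" "s < M" for s
  proof -
    have fin: "finite {t\<in>S. s < t}" using finS by simp
    have ne: "{t\<in>S. s < t} \<noteq> {}" using MS s by auto
    have "nxt s \<in> {t\<in>S. s < t}" unfolding nxt_def using Min_in[OF fin ne] .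
    moreover have "\<forall>t\<in>S. t \<le> s \<or> nxt s \<le> t"
      unfolding nxt_def using Min_le[OF fin] by force
    ultimately show ?thesis by auto
  qed
  have sign: "Pr a s * Pr a (nxt s) < 0" if s: "s \<in> S" "s < M" for s
  proof -
    define u where "u = nxt s"
    have u: "u \<in> S" "s < u" "\<forall>t\<in>S. t \<le> s \<or> u \<le> t" using nxt[OF s] by (auto simp: u_def)
    define T where "T = S - {s} - {u}"
    have T2: "S - {u} - {s} = T" by (auto simp: T_def)
    have p1: "(\<Prod>t\<in>S-{s}. s - t) = (s - u) * (\<Prod>t\<in>T. s - t)"
      unfolding T_def using u finS by (subst prod.remove[of _ u]) auto
    have p2: "(\<Prod>t\<in>S-{u}. u - t) = (u - s) * (\<Prod>t\<in>T. u - t)"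
      unfolding T2[symmetric] using u s finS by (subst prod.remove[of _ s]) auto
    have pos: "(\<Prod>t\<in>T. (s - t) * (u - t)) > 0"
    proof (rule prod_pos_gt)
      fix t assume t: "t \<in> T"
      then have "t < s \<or> u < t" using u(3) by (force simp: T_def)
      then show "(s - t) * (u - t) > 0"
        using u(2) by (auto simp: zero_less_mult_iff)
    qed
    have eq: "Pr a s * Pr a u = (a * a * p s * p u * (\<Prod>t\<in>T. (s - t) * (u - t))) * ((s - u) * (u - s))"
      unfolding Pr_atom[OF s(1), of a] Pr_atom[OF u(1), of a] p1 p2 prod.distrib by (rule ring6)
    have aa: "0 < a * a" using anz by (auto simp: zero_less_mult_iff linorder_neq_iff)
    have "a * a * p s * p u * (\<Prod>t\<in>T. (s - t) * (u - t)) > 0"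
      using anz ppos s u pos by (intro aa mult_pos_pos) auto
    moreover have "(s - u) * (u - s) < 0" using u by (intro mult_neg_pos) auto
    ultimately show ?thesis unfolding u_def[symmetric] eq by (rule mult_pos_neg)
  qed
  have "\<forall>s\<in>S-{M}. \<exists>x. s < x \<and> x < nxt s \<and> Pr a x = 0"
  proof
    fix s assume s: "s \<in> S - {M}"
    then have s': "s \<in> S" "s < M" using leM by (auto simp: order_le_less)
    show "\<exists>x. s < x \<and> x < nxt s \<and> Pr a x = 0"
      by (rule IVT_strict[OF Pr_cont]) (use nxt[OF s'] sign[OF s'] in auto)
  qed
  then obtain r where r: "\<forall>s\<in>S-{M}. s < r s \<and> r s < nxt s \<and> Pr a (r s) = 0" by metis
  have rlt: "s \<in> S - {M} \<Longrightarrow> r s < M" for s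
    using r nxt leM by (metis DiffD1 DiffD2 insertI1 le_less less_le_trans)
  have inj: "inj_on r (S - {M})"
  proof (rule inj_onI)
    fix s1 s2 assume s1: "s1 \<in> S - {M}" and s2: "s2 \<in> S - {M}" and e: "r s1 = r s2"
    have lt: False if "x1 \<in> S - {M}" "x2 \<in> S - {M}" "x1 < x2" "r x1 = r x2" for x1 x2
    proof -
      have "x1 < M" using that leM by (auto simp: order_le_less)
      then have "nxt x1 \<le> x2" using nxt[of x1] that by force
      moreover have "r x1 < nxt x1" "x2 < r x2" using r that(1,2) by auto
      ultimately show False using that(4) by linarith
    qed
    show "s1 = s2" using lt[OF s1 s2] lt[OF s2 s1] e by (metis linorder_neqE_linordered_idom)
  qed
  have "\<exists>e. Pr a e = 0 \<and> e \<notin> r ` (S - {M})"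
  proof (cases "a > 0")
    case apos: True
    define x0 where "x0 = M + a + 1"
    have PM: "Pr a M < 0"
    proof -
      have "(\<Prod>t\<in>S-{M}. M - t) > 0"
        using leM by (intro prod_pos_gt) (auto simp: order_le_less)
      then have "a * p M * (\<Prod>t\<in>S-{M}. M - t) > 0" using apos ppos MS by simp
      then show ?thesis using Pr_atom[OF MS, of a] by simp
    qed
    have x0S: "x0 \<notin> S" using leM apos by (force simp: x0_def)
    have Px0: "Pr a x0 > 0"
    proof -
      have Q: "Qr x0 > 0" unfolding Qr_def using leM apos
        by (intro prod_pos_gt) (force simp: x0_def)
      have "Gr x0 \<le> (\<Sum>s\<in>S. p s / (a + 1))"
        unfolding Gr_def
      proof (rule sum_mono)
        fix s assume s: "s \<in> S"
        have "a + 1 \<le> x0 - s" using leM[OF s] by (simp add: x0_def)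
        then show "p s / (x0 - s) \<le> p s / (a + 1)"
          using ppos s apos by (intro divide_left_mono) auto
      qed
      also have "\<dots> = 1 / (a + 1)" using psum by (simp add: sum_divide_distrib[symmetric])
      finally have "a * Gr x0 \<le> a * (1 / (a + 1))" by (rule mult_left_mono) (use apos in simp)
      also have "\<dots> < 1" using apos by (simp add: divide_less_eq)
      finally have "1 - a * Gr x0 > 0" by simp
      then show ?thesis using Pr_off[OF x0S] Q by simp
    qed
    have "M < x0" using apos by (simp add: x0_def)
    then obtain e where e: "M < e" "e < x0" "Pr a e = 0"
      using IVT_strict[OF Pr_cont, of M x0 a] PM Px0 by (auto simp: mult_neg_pos)
    show ?thesis using e rlt by (intro exI[of _ e]) force
  next
    case False
    then have aneg: "a < 0" using anz by simp
    define m where "m = Min S"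
    have mS: "m \<in> S" using finS neS by (simp add: m_def)
    have gem: "t \<in> S \<Longrightarrow> m \<le> t" for t using finS by (simp add: m_def)
    define x0 where "x0 = m + a - 1"
    have x0S: "x0 \<notin> S" using gem aneg by (force simp: x0_def)
    define K where "K = (\<Sum>s\<in>S. p s / (s - x0))"
    have GK: "Gr x0 = - K" unfolding Gr_def K_def
      by (simp add: sum_negf[symmetric] minus_divide_right)
    have "K \<le> (\<Sum>s\<in>S. p s / (1 - a))"
      unfolding K_def
    proof (rule sum_mono)
      fix s assume s: "s \<in> S"
      have "1 - a \<le> s - x0" using gem[OF s] by (simp add: x0_def)
      then show "p s / (s - x0) \<le> p s / (1 - a)"
        using ppos s aneg by (intro divide_left_mono) auto
    qed
    also have "\<dots> = 1 / (1 - a)" using psum by (simp add: sum_divide_distrib[symmetric])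
    finally have "(- a) * K \<le> (- a) * (1 / (1 - a))" by (rule mult_left_mono) (use aneg in simp)
    also have "\<dots> < 1"
    proof -
      have "1 - a > 0" using aneg by simp
      then show ?thesis by (simp add: divide_less_eq less_divide_eq)
    qed
    finally have pos1: "1 - a * Gr x0 > 0" using GK by simp
    have Qx0: "Qr x0 = (x0 - m) * (\<Prod>t\<in>S-{m}. x0 - t)"
      unfolding Qr_def using mS finS by (simp add: prod.remove)
    have pp: "(\<Prod>t\<in>S-{m}. (m - t) * (x0 - t)) > 0"
    proof (rule prod_pos_gt)
      fix t assume t: "t \<in> S - {m}"
      then have "m < t" using gem by (force simp: order_le_less)
      moreover have "x0 < t" using gem t aneg by (force simp: x0_def)
      ultimately show "(m - t) * (x0 - t) > 0" by (intro mult_neg_neg) auto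
    qed
    have eq: "Pr a x0 * Pr a m = ((- a) * p m * (1 - a * Gr x0) * (\<Prod>t\<in>S-{m}. (m - t) * (x0 - t))) * (x0 - m)"
      unfolding Pr_off[OF x0S, of a] Pr_atom[OF mS, of a] Qx0 prod.distrib by (rule ring7)
    have "(- a) * p m * (1 - a * Gr x0) * (\<Prod>t\<in>S-{m}. (m - t) * (x0 - t)) > 0"
      using aneg ppos mS pos1 pp by (intro mult_pos_pos) auto
    moreover have "x0 - m < 0" using aneg by (simp add: x0_def)
    ultimately have sg: "Pr a x0 * Pr a m < 0" unfolding eq by (rule mult_pos_neg)
    have "x0 < m" using aneg by (simp add: x0_def)
    then obtain e where e: "x0 < e" "e < m" "Pr a e = 0"
      using IVT_strict[OF Pr_cont, of x0 m a] sg by auto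
    have "e \<notin> r ` (S - {M})"
    proof
      assume "e \<in> r ` (S - {M})"
      then obtain s where s: "s \<in> S - {M}" "e = r s" by blast
      then show False using r gem[of s] e by force
    qed
    then show ?thesis using e by blast
  qed
  then obtain e where e: "Pr a e = 0" "e \<notin> r ` (S - {M})" by blast
  define B where "B = insert e (r ` (S - {M}))"
  have "card B = Suc (card (S - {M}))" unfolding B_def using e finS card_image[OF inj] by simp
  also have "\<dots> = card S" using MS finS n_pos by simp
  finally have "card B = card S" .
  moreover have "finite B" using finS by (simp add: B_def)
  moreover have "\<forall>b\<in>B. Pr a b = 0" using r e by (auto simp: B_def)
  ultimately show ?thesis by blast
qed

end


context nud
begin

lemma Im_ofreal_div: "Im (complex_of_real c / w) = c * Im (1 / w)"
  by (simp add: Im_divide)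

lemma Gc_Im: assumes z: "Im z > 0" shows "Im (Gc z) < 0"
proof -
  have "Im (Gc z) = (\<Sum>s\<in>S. p s * Im (1 / (z - complex_of_real s)))"
    by (simp add: Gc_def Im_ofreal_div)
  moreover have "(\<Sum>s\<in>S. - (p s * Im (1 / (z - complex_of_real s)))) > 0"
  proof (rule sum_pos[OF finS neS])
    fix s assume s: "s \<in> S"
    have "Im (1 / (z - complex_of_real s)) < 0" using z by (intro Im_inv_neg) simp
    then show "- (p s * Im (1 / (z - complex_of_real s))) > 0" using ppos s by (simp add: mult_pos_neg)
  qed
  ultimately show ?thesis by (simp add: sum_negf)
qed

lemma Qp_nz: "Im z > 0 \<Longrightarrow> poly Qp z \<noteq> 0"
  unfolding poly_Qp using finS by (auto simp: prod_zero_iff)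

lemma Gc_eq: assumes z: "Im z > 0" shows "Gc z = poly Rp z / poly Qp z"
proof -
  have "poly Qp z * (complex_of_real (p s) / (z - complex_of_real s))
        = complex_of_real (p s) * (\<Prod>t\<in>S-{s}. z - complex_of_real t)" if s: "s \<in> S" for s
  proof -
    have "poly Qp z = (z - complex_of_real s) * (\<Prod>t\<in>S-{s}. z - complex_of_real t)"
      unfolding poly_Qp using s finS by (simp add: prod.remove)
    moreover have "z - complex_of_real s \<noteq> 0" using z by (auto simp: complex_eq_iff)
    ultimately show ?thesis by simp
  qed
  then have "poly Qp z * Gc z = poly Rp z"
    unfolding Gc_def poly_Rp sum_distrib_left by (rule sum.cong[OF refl])
  then show ?thesis using Qp_nz[OF z] by (simp add: field_simps)
qed

lemma PF: "\<exists>B d. finite B \<and> card B = card S \<and> (\<forall>b\<in>B. Pr a b = 0 \<and> d b > 0) \<and> sum d B = 1 \<and>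
   (\<forall>z. Im z > 0 \<longrightarrow> 1 / (1 / Gc z - complex_of_real a) = (\<Sum>b\<in>B. complex_of_real (d b) / (z - complex_of_real b)))"
proof -
  obtain B where finB: "finite B" and cB: "card B = card S" and rB: "\<forall>b\<in>B. Pr a b = 0"
    using roots_exist by blast
  define n where "n = card S"
  have npos: "n > 0" using n_pos by (simp add: n_def)
  have cBc: "card (complex_of_real ` B) = n"
  proof -
    have "inj_on complex_of_real B" by (simp add: inj_on_def)
    then show ?thesis using cB card_image by (metis n_def)
  qed
  have cBm: "b \<in> B \<Longrightarrow> card (B - {b}) = n - 1" for b using finB cB by (simp add: n_def)
  have I1: "Pp a = (\<Prod>b\<in>B. lin b)"
  proof -
    define D where "D = Pp a - (\<Prod>b\<in>B. lin b)"
    have "degree D \<le> n" unfolding D_def using deg_Pp(1) prodlin(1)[OF finB] cB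
      by (intro degree_diff_le) (auto simp: n_def)
    moreover have "coeff D n = 0" unfolding D_def using deg_Pp(2) prodlin(2)[OF finB] cB by (simp add: n_def)
    ultimately have "degree D < n" using npos by (rule deg_lt)
    moreover have "\<forall>x\<in>complex_of_real ` B. poly D x = 0"
    proof
      fix x assume "x \<in> complex_of_real ` B"
      then obtain b where b: "b \<in> B" "x = complex_of_real b" by blast
      have "poly (\<Prod>b\<in>B. lin b) x = 0" using b finB by (auto simp: poly_prod prod_zero_iff)
      then show "poly D x = 0" using b rB by (simp add: D_def poly_Pp_real)
    qed
    ultimately have "D = 0" using cBc finB by (intro vanish[of "complex_of_real ` B"]) auto
    then show ?thesis by (simp add: D_def)
  qed
  define d where "d b = Rr b / (\<Prod>b'\<in>B-{b}. b - b')" for b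
  have prodnz: "b \<in> B \<Longrightarrow> (\<Prod>b'\<in>B-{b}. b - b') \<noteq> 0" for b using finB by auto
  define Sd where "Sd = (\<Sum>b\<in>B. smult (complex_of_real (d b)) (\<Prod>b'\<in>B-{b}. lin b'))"
  have I2: "Rp = Sd"
  proof -
    define D where "D = Rp - Sd"
    have dS: "degree Sd \<le> n - 1" unfolding Sd_def
    proof (intro degree_sum_le finB)
      fix b assume b: "b \<in> B"
      show "degree (smult (complex_of_real (d b)) (\<Prod>b'\<in>B-{b}. lin b')) \<le> n - 1"
        using prodlin(1)[of "B - {b}"] finB cBm[OF b] by (simp add: order_trans[OF degree_smult_le])
    qed
    have "degree D \<le> n - 1" unfolding D_def using deg_Rp(1) dS
      by (intro degree_diff_le) (auto simp: n_def)
    then have "degree D < n" using npos by simp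
    moreover have "\<forall>x\<in>complex_of_real ` B. poly D x = 0"
    proof
      fix x assume "x \<in> complex_of_real ` B"
      then obtain b0 where b0: "b0 \<in> B" "x = complex_of_real b0" by blast
      have "poly Sd x = (\<Sum>b\<in>B. complex_of_real (d b * (\<Prod>b'\<in>B-{b}. b0 - b')))"
        unfolding Sd_def b0 by (simp add: poly_sum poly_prod)
      also have "\<dots> = complex_of_real (d b0 * (\<Prod>b'\<in>B-{b0}. b0 - b')) +
                     (\<Sum>b\<in>B-{b0}. complex_of_real (d b * (\<Prod>b'\<in>B-{b}. b0 - b')))"
        using b0 finB by (simp add: sum.remove)
      also have "(\<Sum>b\<in>B-{b0}. complex_of_real (d b * (\<Prod>b'\<in>B-{b}. b0 - b'))) = 0"
        using b0 finB by (intro sum.neutral) (auto simp: prod_zero_iff)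
      also have "d b0 * (\<Prod>b'\<in>B-{b0}. b0 - b') = Rr b0" using prodnz[OF b0(1)] by (simp add: d_def)
      finally have "poly Sd x = complex_of_real (Rr b0)" by simp
      then show "poly D x = 0" using b0 by (simp add: D_def poly_Rp_real)
    qed
    ultimately have "D = 0" using cBc finB by (intro vanish[of "complex_of_real ` B"]) auto
    then show ?thesis by (simp add: D_def)
  qed
  have I3: "sum d B = 1"
  proof -
    have "coeff Sd (n - 1) = (\<Sum>b\<in>B. complex_of_real (d b) * coeff (\<Prod>b'\<in>B-{b}. lin b') (n - 1))"
      by (simp add: Sd_def coeff_sum)
    also have "\<dots> = (\<Sum>b\<in>B. complex_of_real (d b))"
    proof (rule sum.cong[OF refl])
      fix b assume b: "b \<in> B"
      have "coeff (\<Prod>b'\<in>B-{b}. lin b') (n - 1) = 1" using prodlin(2)[of "B - {b}"] finB cBm[OF b] by simp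
      then show "complex_of_real (d b) * coeff (\<Prod>b'\<in>B-{b}. lin b') (n - 1) = complex_of_real (d b)" by simp
    qed
    finally have "complex_of_real (sum d B) = 1" using I2 deg_Rp(2) by (simp add: n_def)
    then show ?thesis by (metis of_real_eq_1_iff)
  qed
  have I4: "1 / (1 / Gc z - complex_of_real a) = (\<Sum>b\<in>B. complex_of_real (d b) / (z - complex_of_real b))"
    if z: "Im z > 0" for z
  proof -
    have Gnz: "Gc z \<noteq> 0" using Gc_Im[OF z] by auto
    have Qnz: "poly Qp z \<noteq> 0" by (rule Qp_nz[OF z])
    have G: "Gc z = poly Rp z / poly Qp z" by (rule Gc_eq[OF z])
    have Rnz: "poly Rp z \<noteq> 0" using Gnz G by auto
    have zb: "b \<in> B \<Longrightarrow> z - complex_of_real b \<noteq> 0" for b using z by (auto simp: complex_eq_iff)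
    have P: "poly (Pp a) z = (\<Prod>b\<in>B. z - complex_of_real b)" using I1 by (simp add: poly_prod)
    have Pnz: "poly (Pp a) z \<noteq> 0" unfolding P using zb finB by (auto simp: prod_zero_iff)
    have PQR: "poly (Pp a) z = poly Qp z - complex_of_real a * poly Rp z" by (simp add: Pp_def)
    have "1 / (1 / Gc z - complex_of_real a) = poly Rp z / poly (Pp a) z"
      unfolding G PQR using Qnz Rnz Pnz[unfolded PQR] by (simp add: field_simps)
    also have "\<dots> = (\<Sum>b\<in>B. complex_of_real (d b) * (\<Prod>b'\<in>B-{b}. z - complex_of_real b')) / (\<Prod>b\<in>B. z - complex_of_real b)"
      unfolding P I2 Sd_def by (simp add: poly_sum poly_prod)
    also have "\<dots> = (\<Sum>b\<in>B. complex_of_real (d b) / (z - complex_of_real b))"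
      unfolding sum_divide_distrib
    proof (rule sum.cong[OF refl])
      fix b assume b: "b \<in> B"
      have "(\<Prod>b\<in>B. z - complex_of_real b) = (z - complex_of_real b) * (\<Prod>b'\<in>B-{b}. z - complex_of_real b')"
        using b finB by (simp add: prod.remove)
      moreover have "(\<Prod>b'\<in>B-{b}. z - complex_of_real b') \<noteq> 0" using zb finB by (auto simp: prod_zero_iff)
      ultimately show "complex_of_real (d b) * (\<Prod>b'\<in>B-{b}. z - complex_of_real b') / (\<Prod>b\<in>B. z - complex_of_real b)
          = complex_of_real (d b) / (z - complex_of_real b)" using zb[OF b] by simp
    qed
    finally show ?thesis .
  qed
  have I5: "d b0 > 0" if b0: "b0 \<in> B" for b0
  proof -
    have "Rr b0 \<noteq> 0" using root_R rB b0 by blast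
    then have dnz: "d b0 \<noteq> 0" using prodnz[OF b0] by (simp add: d_def)
    define y where "y n = 1 / real (Suc n)" for n
    have ypos: "y n > 0" for n by (simp add: y_def)
    define v where "v n = (\<Sum>b\<in>B. d b * (- ((y n)\<^sup>2 / ((b0 - b)\<^sup>2 + (y n)\<^sup>2))))" for n
    have vneg: "v n < 0" for n
    proof -
      let ?z = "complex_of_real b0 + \<i> * complex_of_real (y n)"
      have z: "Im ?z > 0" using ypos[of n] by simp
      have "Im (1 / Gc ?z - complex_of_real a) > 0" using Im_inv_pos[OF Gc_Im[OF z]] by simp
      then have neg: "Im (1 / (1 / Gc ?z - complex_of_real a)) < 0" by (rule Im_inv_neg)
      have "y n * Im (1 / (1 / Gc ?z - complex_of_real a)) = v n"
        unfolding I4[OF z] v_def Im_sum sum_distrib_left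
      proof (rule sum.cong[OF refl])
        fix b assume "b \<in> B"
        have "Im (complex_of_real (d b) / (?z - complex_of_real b)) = d b * (- y n / ((b0 - b)\<^sup>2 + (y n)\<^sup>2))"
          by (simp add: Im_divide power2_eq_square)
        then show "y n * Im (complex_of_real (d b) / (?z - complex_of_real b)) = d b * (- ((y n)\<^sup>2 / ((b0 - b)\<^sup>2 + (y n)\<^sup>2)))"
          by (simp add: power2_eq_square)
      qed
      then show ?thesis using neg ypos[of n] by (metis mult_pos_neg)
    qed
    have y0: "y \<longlonglongrightarrow> 0" unfolding y_def using LIMSEQ_Suc[OF lim_const_over_n[of 1]] by simp
    have lim: "v \<longlonglongrightarrow> (\<Sum>b\<in>B. d b * (- (if b = b0 then 1 else 0)))"
      unfolding v_def
    proof (intro tendsto_sum tendsto_mult tendsto_const tendsto_minus)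
      fix b assume "b \<in> B"
      show "(\<lambda>n. (y n)\<^sup>2 / ((b0 - b)\<^sup>2 + (y n)\<^sup>2)) \<longlonglongrightarrow> (if b = b0 then 1 else 0)"
      proof (cases "b = b0")
        case True
        have "(\<lambda>n. (y n)\<^sup>2 / ((b0 - b)\<^sup>2 + (y n)\<^sup>2)) = (\<lambda>n. 1)"
          using True ypos[THEN less_imp_neq] by (auto intro!: ext)
        then show ?thesis using True by simp
      next
        case False
        then have dd: "(b0 - b)\<^sup>2 > 0" by simp
        have "(\<lambda>n. (y n)\<^sup>2 / ((b0 - b)\<^sup>2 + (y n)\<^sup>2)) \<longlonglongrightarrow> 0\<^sup>2 / ((b0 - b)\<^sup>2 + 0\<^sup>2)"
          by (intro tendsto_intros y0) (use dd in simp)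
        then show ?thesis using False by simp
      qed
    qed
    have "(\<Sum>b\<in>B. d b * (- (if b = b0 then 1 else 0))) = - d b0"
      using b0 finB by (simp add: if_distrib sum.delta' cong: if_cong)
    then have "v \<longlonglongrightarrow> - d b0" using lim by simp
    then have "- d b0 \<le> 0" by (rule LIMSEQ_le_const2) (use vneg in \<open>auto intro: less_imp_le\<close>)
    then show ?thesis using dnz by simp
  qed
  show ?thesis using finB cB rB I3 I4 I5 by blast
qed

end


theorem corollary3p3:
  fixes \<mu> \<nu> :: "real measure" and m n :: nat
  assumes "atomic_prob \<mu> m" and "atomic_prob \<nu> n"
  shows "atomic_prob (monotone_conv \<mu> \<nu>) (m * n)"
proof -
  obtain A lam where rmu: "atoms_rep \<mu> A lam" and cA: "card A = m"
    using assms(1) atomic_prob_iff by blast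
  obtain S p where rnu: "atoms_rep \<nu> S p" and cS: "card S = n"
    using assms(2) atomic_prob_iff by blast
  have finA: "finite A" and lpos: "\<forall>a\<in>A. lam a > 0" using rmu by (auto simp: atoms_rep_def)
  have lsum: "sum lam A = 1" using rep_sum[OF rmu] .
  have finS: "finite S" and ppos: "\<forall>s\<in>S. p s > 0" using rnu by (auto simp: atoms_rep_def)
  have psum: "sum p S = 1" using rep_sum[OF rnu] .
  have neS: "S \<noteq> {}" using psum by auto
  interpret nud S p using finS neS ppos psum by unfold_locales
  have Gnu: "cauchy_G \<nu> z = Gc z" for z using rep_G[OF rnu] by (simp add: Gc_def)
  define \<Phi> where "\<Phi> a B d \<longleftrightarrow> finite B \<and> card B = card S \<and> (\<forall>b\<in>B. Pr a b = 0 \<and> d b > 0) \<and> sum d B = 1 \<and>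
   (\<forall>z. Im z > 0 \<longrightarrow> 1 / (1 / Gc z - complex_of_real a) = (\<Sum>b\<in>B. complex_of_real (d b) / (z - complex_of_real b)))"
    for a B and d :: "real \<Rightarrow> real"
  have ex: "\<exists>B d. \<Phi> a B d" for a unfolding \<Phi>_def by (rule PF)
  define Bf where "Bf a = (SOME B. \<exists>d. \<Phi> a B d)" for a
  have ex2: "\<exists>d. \<Phi> a (Bf a) d" for a unfolding Bf_def by (rule someI_ex[OF ex])
  define df where "df a = (SOME d. \<Phi> a (Bf a) d)" for a
  have Phi: "\<Phi> a (Bf a) (df a)" for a unfolding df_def by (rule someI_ex[OF ex2])
  have BD: "finite (Bf a) \<and> card (Bf a) = card S \<and> (\<forall>b\<in>Bf a. Pr a b = 0 \<and> df a b > 0) \<and>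
     sum (df a) (Bf a) = 1 \<and>
   (\<forall>z. Im z > 0 \<longrightarrow> 1 / (1 / Gc z - complex_of_real a) = (\<Sum>b\<in>Bf a. complex_of_real (df a b) / (z - complex_of_real b)))" for a
    using Phi[of a] unfolding \<Phi>_def .
  have disj: "Bf a \<inter> Bf a' = {}" if "a \<noteq> a'" for a a'
  proof (rule ccontr)
    assume "Bf a \<inter> Bf a' \<noteq> {}"
    then obtain x where x: "x \<in> Bf a" "x \<in> Bf a'" by blast
    then have "Pr a x = 0" "Pr a' x = 0" using BD by auto
    then have "(a - a') * Rr x = 0" by (simp add: Pr_def algebra_simps)
    then have "Rr x = 0" using that by simp
    then show False using root_R \<open>Pr a x = 0\<close> by blast
  qed
  define F where "F = (\<Union>a\<in>A. Bf a)"
  have finF: "finite F" using finA BD by (simp add: F_def)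
  have sumF: "(\<Sum>x\<in>F. g x) = (\<Sum>a\<in>A. \<Sum>x\<in>Bf a. g x)" for g :: "real \<Rightarrow> 'b::comm_monoid_add"
    unfolding F_def using finA BD disj by (intro sum.UNION_disjoint) auto
  have cardF: "card F = m * n"
  proof -
    have "card F = (\<Sum>a\<in>A. card (Bf a))"
      unfolding F_def using finA BD disj by (intro card_UN_disjoint) auto
    also have "\<dots> = (\<Sum>a\<in>A. n)" using BD cS by simp
    finally show ?thesis using cA by simp
  qed
  define w where "w x = (\<Sum>a\<in>A. if x \<in> Bf a then lam a * df a x else 0)" for x
  have wF: "w x = lam a * df a x" if a: "a \<in> A" and x: "x \<in> Bf a" for a x
  proof -
    have "w x = (if x \<in> Bf a then lam a * df a x else 0) + (\<Sum>a'\<in>A-{a}. if x \<in> Bf a' then lam a' * df a' x else 0)"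
      unfolding w_def using a finA by (simp add: sum.remove)
    moreover have "(\<Sum>a'\<in>A-{a}. if x \<in> Bf a' then lam a' * df a' x else 0) = 0"
    proof (rule sum.neutral, rule ballI)
      fix a' assume "a' \<in> A - {a}"
      then have "a \<noteq> a'" by auto
      then have "x \<notin> Bf a'" using disj[of a a'] x by blast
      then show "(if x \<in> Bf a' then lam a' * df a' x else 0) = 0" by simp
    qed
    ultimately show ?thesis using x by simp
  qed
  have wpos: "\<forall>x\<in>F. w x > 0"
    unfolding F_def using wF lpos BD by (auto intro!: mult_pos_pos)
  have wsum: "sum w F = 1"
  proof -
    have "sum w F = (\<Sum>a\<in>A. \<Sum>x\<in>Bf a. lam a * df a x)"
      unfolding sumF by (intro sum.cong refl) (simp add: wF)
    also have "\<dots> = (\<Sum>a\<in>A. lam a)" using BD by (simp add: sum_distrib_left[symmetric])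
    finally show ?thesis using lsum by simp
  qed
  define \<rho> where "\<rho> = pmeas F w"
  have rr: "atoms_rep \<rho> F w" unfolding \<rho>_def by (rule pmeas(1)[OF finF wpos wsum])
  have rp: "real_prob_measure \<rho>" using rr by (simp add: atoms_rep_def)
  have Grho: "cauchy_G \<rho> z = cauchy_G \<mu> (cauchy_H \<nu> z)" if z: "Im z > 0" for z
  proof -
    have "cauchy_G \<rho> z = (\<Sum>x\<in>F. complex_of_real (w x) / (z - complex_of_real x))" by (rule rep_G[OF rr])
    also have "\<dots> = (\<Sum>a\<in>A. \<Sum>x\<in>Bf a. complex_of_real (lam a) * (complex_of_real (df a x) / (z - complex_of_real x)))"
      unfolding sumF by (intro sum.cong refl) (simp add: wF)
    also have "\<dots> = (\<Sum>a\<in>A. complex_of_real (lam a) * (1 / (1 / Gc z - complex_of_real a)))"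
    proof (rule sum.cong[OF refl])
      fix a assume "a \<in> A"
      have "(\<Sum>x\<in>Bf a. complex_of_real (lam a) * (complex_of_real (df a x) / (z - complex_of_real x)))
          = complex_of_real (lam a) * (\<Sum>x\<in>Bf a. complex_of_real (df a x) / (z - complex_of_real x))"
        by (rule sum_distrib_left[symmetric])
      also have "\<dots> = complex_of_real (lam a) * (1 / (1 / Gc z - complex_of_real a))"
        using BD[of a] z by simp
      finally show "(\<Sum>x\<in>Bf a. complex_of_real (lam a) * (complex_of_real (df a x) / (z - complex_of_real x)))
          = complex_of_real (lam a) * (1 / (1 / Gc z - complex_of_real a))" .
    qed
    also have "\<dots> = (\<Sum>a\<in>A. complex_of_real (lam a) / (cauchy_H \<nu> z - complex_of_real a))"
      by (simp add: cauchy_H_def Gnu)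
    also have "\<dots> = cauchy_G \<mu> (cauchy_H \<nu> z)" by (rule rep_G[OF rmu, symmetric])
    finally show ?thesis .
  qed
  let ?P = "\<lambda>\<rho>'. real_prob_measure \<rho>' \<and> (\<forall>z. Im z > 0 \<longrightarrow> cauchy_H \<rho>' z = cauchy_H \<mu> (cauchy_H \<nu> z))"
  have Prho: "?P \<rho>" using rp Grho by (simp add: cauchy_H_def)
  have uniq: "\<rho>' = \<rho>" if P: "?P \<rho>'" for \<rho>'
  proof -
    have "\<forall>z. Im z > 0 \<longrightarrow> cauchy_G \<rho>' z = cauchy_G \<rho> z"
    proof (intro allI impI)
      fix z :: complex assume z: "Im z > 0"
      have "cauchy_G \<rho>' z = 1 / cauchy_H \<rho>' z" by (simp add: cauchy_H_def)
      also have "\<dots> = 1 / cauchy_H \<rho> z" using P Prho z by simp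
      also have "\<dots> = cauchy_G \<rho> z" by (simp add: cauchy_H_def)
      finally show "cauchy_G \<rho>' z = cauchy_G \<rho> z" .
    qed
    then have "atoms_rep \<rho>' F w" using uniq_rep[of \<rho>' \<rho> F w] P rr by blast
    then show ?thesis using rep_eq_pmeas by (simp add: \<rho>_def)
  qed
  have "monotone_conv \<mu> \<nu> = \<rho>"
    unfolding monotone_conv_def by (rule the_equality[where P="?P", OF Prho uniq])
  then show ?thesis using atomic_prob_iff rr cardF by blast
qed



end
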